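(* Let $\tau$ be any tiling of the plane by the Kari–Culik tileset $T$ described in the context, and fix any horizontal line of the grid, i.e. fix $j\in\mathbb{Z}$ and let $u=(u_k)_{k\in\mathbb{Z}}$ be the bi-infinite sequence of numerical values of the colors on the top sides of the tiles $\tau(k,j)$, $k\in\mathbb{Z}$ (with $0'$ counted as the value $0$). Then $u$ has an average: there is a real number $x$ such that the averages $\frac{1}{b-a}\sum_{k=a}^{b-1}u_k$ over finite segments $[a,b)$ converge to $x$ as the length $b-a$ tends to infinity (independently of the position of the segments).
   Context: A Wang tile is a unit square with a color on each side; a tiling of the plane assigns a tile to every cell of $\mathbb{Z}^2$ so that adjacent tiles have equal colors on their common side. The Kari–Culik tileset $T$ uses horizontal-edge (top/bottom) colors $0,0',1,2$ (with numerical values $0,0,1,2$) and vertical-edge colors from two disjoint state sets $\{s_0,s_1\}$ and $\{r_0,r_{1/3},r_{2/3}\}$. Writing a tile as (left, bottom, top, right), the 13 tiles are: $(s_0,0,0',s_0)$, $(s_1,0,0',s_1)$, $(s_0,1,2,s_0)$, $(s_1,1,2,s_1)$, $(s_0,1,1,s_1)$, $(s_1,0,1,s_0)$, $(s_1,0',1,s_0)$, $(r_0,2,1,r_{1/3})$, $(r_{1/3},2,1,r_{2/3})$, $(r_{1/3},1,0,r_0)$, $(r_{2/3},1,0,r_{1/3})$, $(r_0,1,1,r_{2/3})$, $(r_{2/3},2,0,r_0)$. *)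

theory Defs
  imports Complex_Main
begin

datatype hcol = H0 | H0' | H1 | H2
datatype vcol = S0 | S1 | R0 | R13 | R23

fun hval :: "hcol \<Rightarrow> real" where
  "hval H0 = 0" | "hval H0' = 0" | "hval H1 = 1" | "hval H2 = 2"

type_synonym tile = "vcol \<times> hcol \<times> hcol \<times> vcol"

definition left_col :: "tile \<Rightarrow> vcol" where "left_col t = fst t"
definition bottom_col :: "tile \<Rightarrow> hcol" where "bottom_col t = fst (snd t)"
definition top_col :: "tile \<Rightarrow> hcol" where "top_col t = fst (snd (snd t))"
definition right_col :: "tile \<Rightarrow> vcol" where "right_col t = snd (snd (snd t))"

definition KC_tiles :: "tile set" where
  "KC_tiles = {(S0,H0,H0',S0), (S1,H0,H0',S1), (S0,H1,H2,S0), (S1,H1,H2,S1),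
               (S0,H1,H1,S1), (S1,H0,H1,S0), (S1,H0',H1,S0),
               (R0,H2,H1,R13), (R13,H2,H1,R23), (R13,H1,H0,R0), (R23,H1,H0,R13),
               (R0,H1,H1,R23), (R23,H2,H0,R0)}"

text \<open>A tiling of the plane: cell (i,j) with i the column (horizontal) and j the row (vertical).\<close>
definition is_tiling :: "tile set \<Rightarrow> (int \<times> int \<Rightarrow> tile) \<Rightarrow> bool" where
  "is_tiling T \<tau> \<longleftrightarrow> (\<forall>i j. \<tau> (i, j) \<in> T
      \<and> right_col (\<tau> (i, j)) = left_col (\<tau> (i + 1, j))
      \<and> top_col (\<tau> (i, j)) = bottom_col (\<tau> (i, j + 1)))"

end

theory Submission
  imports Defs "HOL-Analysis.Kronecker_Approximation_Theorem"
begin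


definition sT :: "tile set" where
  "sT = {(S0,H0,H0',S0), (S1,H0,H0',S1), (S0,H1,H2,S0), (S1,H1,H2,S1),
               (S0,H1,H1,S1), (S1,H0,H1,S0), (S1,H0',H1,S0)}"
definition rT :: "tile set" where
  "rT = {(R0,H2,H1,R13), (R13,H2,H1,R23), (R13,H1,H0,R0), (R23,H1,H0,R13),
               (R0,H1,H1,R23), (R23,H2,H0,R0)}"

fun cv :: "vcol \<Rightarrow> real" where
  "cv S0 = 0" | "cv S1 = 1" | "cv R0 = 0" | "cv R13 = 1/3" | "cv R23 = 2/3"

definition isS :: "vcol \<Rightarrow> bool" where "isS v \<longleftrightarrow> v = S0 \<or> v = S1"

lemma KC_split: "KC_tiles = sT \<union> rT" unfolding KC_tiles_def sT_def rT_def by auto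

lemma sT_props: "t \<in> sT \<Longrightarrow> isS (left_col t) \<and> isS (right_col t)
   \<and> 2 * hval (bottom_col t) + cv (left_col t) = hval (top_col t) + cv (right_col t)
   \<and> hval (bottom_col t) \<in> {0,1}"
  unfolding sT_def isS_def left_col_def right_col_def top_col_def bottom_col_def by auto

lemma rT_props: "t \<in> rT \<Longrightarrow> \<not> isS (left_col t) \<and> \<not> isS (right_col t)
   \<and> hval (bottom_col t) / 3 + cv (right_col t) = hval (top_col t) + cv (left_col t)
   \<and> hval (bottom_col t) \<in> {1,2}"
  unfolding rT_def isS_def left_col_def right_col_def top_col_def bottom_col_def by auto

lemma cv_bnd: "0 \<le> cv v \<and> cv v \<le> 1" by (cases v) auto

lemma int_const:
  fixes P :: "int \<Rightarrow> bool"
  assumes "\<And>k. P k = P (k+1)"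
  shows "P k = P 0"
proof (induction k rule: int_induct[where k=0])
  case base then show ?case by simp
next
  case (step1 i) then show ?case using assms[of i] by simp
next
  case (step2 i) then show ?case using assms[of "i-1"] by simp
qed

lemma row_type:
  assumes "is_tiling KC_tiles \<tau>"
  shows "(\<forall>k. \<tau> (k,i) \<in> sT) \<or> (\<forall>k. \<tau> (k,i) \<in> rT)"
proof -
  have mem: "\<tau> (k,i) \<in> sT \<or> \<tau> (k,i) \<in> rT" for k
    using assms KC_split unfolding is_tiling_def by auto
  have iff: "(\<tau> (k,i) \<in> sT) = isS (left_col (\<tau> (k,i)))" for k
    using mem[of k] sT_props rT_props by blast
  have "isS (left_col (\<tau> (k,i))) = isS (left_col (\<tau> (k+1,i)))" for k
    using mem[of k] sT_props rT_props assms unfolding is_tiling_def by metis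
  then have "isS (left_col (\<tau> (k,i))) = isS (left_col (\<tau> (0,i)))" for k
    using int_const[of "\<lambda>k. isS (left_col (\<tau> (k,i)))"] by blast
  then show ?thesis using iff mem by metis
qed

definition uu :: "(int \<times> int \<Rightarrow> tile) \<Rightarrow> int \<Rightarrow> int \<Rightarrow> real" where
  "uu \<tau> i k = hval (top_col (\<tau> (k,i)))"
definition TT :: "(int \<times> int \<Rightarrow> tile) \<Rightarrow> int \<Rightarrow> int \<Rightarrow> nat \<Rightarrow> real" where
  "TT \<tau> i a L = (\<Sum>k<L. uu \<tau> i (a + int k))"

lemma srow_rel:
  assumes til: "is_tiling KC_tiles \<tau>" and s: "\<forall>k. \<tau> (k,i+1) \<in> sT"
  shows "TT \<tau> (i+1) a L = 2 * TT \<tau> i a L + cv (left_col (\<tau> (a,i+1))) - cv (left_col (\<tau> (a + int L,i+1)))"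
    and "uu \<tau> i k \<in> {0,1}"
proof -
  have tile: "uu \<tau> (i+1) k = 2 * uu \<tau> i k + cv (left_col (\<tau> (k,i+1))) - cv (left_col (\<tau> (k+1,i+1)))" for k
    using sT_props[OF s[rule_format, of k]] til unfolding is_tiling_def uu_def by (metis add_diff_cancel_right')
  show "TT \<tau> (i+1) a L = 2 * TT \<tau> i a L + cv (left_col (\<tau> (a,i+1))) - cv (left_col (\<tau> (a + int L,i+1)))"
  proof (induction L)
    case 0 then show ?case by (simp add: TT_def)
  next
    case (Suc L) then show ?case using tile[of "a + int L"] by (simp add: TT_def algebra_simps)
  qed
  show "uu \<tau> i k \<in> {0,1}"
    using sT_props[OF s[rule_format, of k]] til unfolding is_tiling_def uu_def by metis
qed

lemma rrow_rel:
  assumes til: "is_tiling KC_tiles \<tau>" and s: "\<forall>k. \<tau> (k,i+1) \<in> rT"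
  shows "TT \<tau> (i+1) a L = TT \<tau> i a L / 3 + cv (left_col (\<tau> (a + int L,i+1))) - cv (left_col (\<tau> (a,i+1)))"
    and "uu \<tau> i k \<in> {1,2}"
proof -
  have tile: "uu \<tau> (i+1) k = uu \<tau> i k / 3 + cv (left_col (\<tau> (k+1,i+1))) - cv (left_col (\<tau> (k,i+1)))" for k
    using rT_props[OF s[rule_format, of k]] til unfolding is_tiling_def uu_def by (metis add_diff_cancel_right')
  show "TT \<tau> (i+1) a L = TT \<tau> i a L / 3 + cv (left_col (\<tau> (a + int L,i+1))) - cv (left_col (\<tau> (a,i+1)))"
  proof (induction L)
    case 0 then show ?case by (simp add: TT_def)
  next
    case (Suc L) then show ?case using tile[of "a + int L"] by (simp add: TT_def algebra_simps add_divide_distrib)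
  qed
  show "uu \<tau> i k \<in> {1,2}"
    using rT_props[OF s[rule_format, of k]] til unfolding is_tiling_def uu_def by metis
qed



lemma sub_mult:
  fixes M :: "nat \<Rightarrow> real"
  assumes sub: "\<And>m n. M (m+n) \<le> M m + M n"
  shows "M (q*L + r) \<le> real q * M L + M r"
proof (induction q)
  case 0 then show ?case by simp
next
  case (Suc q)
  have "M (Suc q * L + r) = M (L + (q*L + r))" by (simp add: algebra_simps)
  also have "\<dots> \<le> M L + M (q*L+r)" by (rule sub)
  finally show ?case using Suc by (simp add: algebra_simps)
qed

lemma fekete:
  fixes M :: "nat \<Rightarrow> real"
  assumes sub: "\<And>m n. M (m+n) \<le> M m + M n" and bnd: "\<And>n. \<bar>M n\<bar> \<le> K * real n"
  shows "convergent (\<lambda>n. M n / real n)"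
proof -
  define S where "S = (\<lambda>n. M n / real n) ` {1..}"
  define A where "A = Inf S"
  have K0: "K \<ge> 0" using bnd[of 1] by simp
  have Sne: "S \<noteq> {}" unfolding S_def by auto
  have bS: "x \<ge> -K" if "x \<in> S" for x
  proof -
    from that obtain n where n: "n \<ge> 1" "x = M n / real n" unfolding S_def by auto
    have "-K * real n \<le> M n" using bnd[of n] by simp
    then have "-K * real n \<le> x * real n" using n by simp
    then have "(-K) * real n \<le> x * real n" by simp
    moreover have "real n > 0" using n(1) by simp
    ultimately show ?thesis by (meson mult_le_cancel_right_pos)
  qed
  have bddS: "bdd_below S" using bS by (meson bdd_below.I)
  have lower: "A \<le> M n / real n" if "n \<ge> 1" for n
    unfolding A_def by (rule cInf_lower) (use that bddS S_def in auto)
  have "(\<lambda>n. M n / real n) \<longlonglongrightarrow> A"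
  proof (rule LIMSEQ_I)
    fix e :: real assume e: "e > 0"
    have "Inf S < A + e/2" using e A_def by simp
    then obtain x where "x \<in> S" "x < A + e/2" using cInf_lessD[OF Sne] by blast
    then obtain L0 where L0: "L0 \<ge> 1" "M L0 / real L0 < A + e/2" unfolding S_def by auto
    define \<mu> where "\<mu> = M L0 / real L0"
    have \<mu>b: "\<bar>\<mu>\<bar> \<le> K" using bnd[of L0] L0(1) by (simp add: \<mu>_def abs_divide field_simps)
    define N where "N = nat \<lceil>4 * K * real L0 / e\<rceil> + 1"
    show "\<exists>no. \<forall>n\<ge>no. norm (M n / real n - A) < e"
    proof (intro exI allI impI)
      fix n assume nN: "n \<ge> N"
      have n1: "n \<ge> 1" using nN N_def by simp
      have npos: "real n > 0" using n1 by simp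
      have nbig: "real n > 4 * K * real L0 / e" using nN unfolding N_def by linarith
      define q where "q = n div L0"
      define r where "r = n mod L0"
      have nqr: "n = q * L0 + r" unfolding q_def r_def by simp
      have rL: "real r \<le> real L0" unfolding r_def using L0(1)
        by (metis less_imp_le_nat mod_less_divisor of_nat_le_iff not_one_le_zero neq0_conv)
      have r_n: "real r \<le> real n" unfolding r_def by simp
      have "M n \<le> real q * M L0 + M r" using sub_mult[OF sub] nqr by metis
      also have "\<dots> \<le> real q * M L0 + K * real r" using bnd[of r] by simp
      also have "real q * M L0 = (real n - real r) * \<mu>"
        using L0(1) nqr unfolding \<mu>_def by (simp add: field_simps)
      finally have Mn: "M n \<le> (real n - real r) * \<mu> + K * real r" .
      have "real r * (-\<mu>) \<le> real r * K" using \<mu>b by (intro mult_left_mono) auto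
      then have "(real n - real r) * \<mu> \<le> real n * \<mu> + real r * K" by (simp add: algebra_simps)
      with Mn have "M n \<le> real n * \<mu> + 2 * K * real r" by (simp add: algebra_simps)
      also have "\<dots> \<le> real n * \<mu> + 2 * K * real L0" using rL K0 by (simp add: mult_left_mono)
      finally have "M n / real n \<le> \<mu> + 2 * K * real L0 / real n" using npos by (simp add: field_simps)
      moreover have "2 * K * real L0 / real n \<le> e/2"
      proof -
        have "4 * K * real L0 \<le> real n * e" using nbig e by (simp add: field_simps)
        then show ?thesis using npos by (simp add: field_simps)
      qed
      ultimately have "M n / real n < A + e" using L0(2) \<mu>_def by simp
      moreover have "A \<le> M n / real n" using lower n1 by simp
      ultimately show "norm (M n / real n - A) < e" using e by simp
    qed
  qed
  then show ?thesis by (rule convergentI)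
qed



definition Mx :: "(int \<Rightarrow> nat \<Rightarrow> real) \<Rightarrow> nat \<Rightarrow> real" where "Mx T L = (SUP a. T a L)"
definition Mn :: "(int \<Rightarrow> nat \<Rightarrow> real) \<Rightarrow> nat \<Rightarrow> real" where "Mn T L = (INF a. T a L)"

definition good :: "(int \<Rightarrow> nat \<Rightarrow> real) \<Rightarrow> real \<Rightarrow> bool" where
  "good T K \<longleftrightarrow> (\<forall>a L1 L2. T a (L1+L2) = T a L1 + T (a + int L1) L2) \<and> (\<forall>a L. \<bar>T a L\<bar> \<le> K * real L)"

lemma Mx_upper: "good T K \<Longrightarrow> T a L \<le> Mx T L"
  unfolding Mx_def good_def
  by (rule cSUP_upper) (auto intro!: bdd_aboveI2[where M="K * real L"] simp: abs_le_iff)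

lemma Mx_least: "(\<And>a. T a L \<le> c) \<Longrightarrow> Mx T L \<le> c"
  unfolding Mx_def by (rule cSUP_least) auto

lemma Mn_lower: "good T K \<Longrightarrow> Mn T L \<le> T a L"
  unfolding Mn_def good_def
  by (rule cINF_lower) (auto intro!: bdd_belowI2[where m="- K * real L"] simp: abs_le_iff minus_le_iff)

lemma Mn_greatest: "(\<And>a. c \<le> T a L) \<Longrightarrow> c \<le> Mn T L"
  unfolding Mn_def by (rule cINF_greatest) auto

lemma Mx_conv: assumes g: "good T K" shows "convergent (\<lambda>L. Mx T L / real L)"
proof (rule fekete)
  fix m n
  show "Mx T (m+n) \<le> Mx T m + Mx T n"
  proof (rule Mx_least)
    fix a
    have "T a (m+n) = T a m + T (a + int m) n" using g unfolding good_def by blast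
    also have "\<dots> \<le> Mx T m + Mx T n" using Mx_upper[OF g] by (intro add_mono)
    finally show "T a (m+n) \<le> Mx T m + Mx T n" .
  qed
next
  fix n
  have "T 0 n \<le> Mx T n" by (rule Mx_upper[OF g])
  moreover have "\<bar>T 0 n\<bar> \<le> K * real n" using g unfolding good_def by blast
  moreover have "Mx T n \<le> K * real n" using g unfolding good_def by (intro Mx_least) (auto simp: abs_le_iff)
  ultimately show "\<bar>Mx T n\<bar> \<le> K * real n" by (simp add: abs_le_iff)
qed

lemma Mn_conv: assumes g: "good T K" shows "convergent (\<lambda>L. Mn T L / real L)"
proof -
  have "convergent (\<lambda>L. (- Mn T L) / real L)"
  proof (rule fekete)
    fix m n
    have "Mn T m + Mn T n \<le> Mn T (m+n)"
    proof (rule Mn_greatest)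
      fix a
      have "T a (m+n) = T a m + T (a + int m) n" using g unfolding good_def by blast
      moreover have "Mn T m + Mn T n \<le> T a m + T (a + int m) n" using Mn_lower[OF g] by (intro add_mono)
      ultimately show "Mn T m + Mn T n \<le> T a (m+n)" by simp
    qed
    then show "- Mn T (m+n) \<le> - Mn T m + - Mn T n" by simp
  next
    fix n
    have "Mn T n \<le> T 0 n" by (rule Mn_lower[OF g])
    moreover have "\<bar>T 0 n\<bar> \<le> K * real n" using g unfolding good_def by blast
    moreover have "- K * real n \<le> Mn T n" using g unfolding good_def by (intro Mn_greatest) (auto simp: abs_le_iff minus_le_iff)
    ultimately show "\<bar>- Mn T n\<bar> \<le> K * real n" by (simp add: abs_le_iff)
  qed
  then obtain l where "(\<lambda>L. (- Mn T L) / real L) \<longlonglongrightarrow> l" by (auto simp: convergent_def)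
  then have "(\<lambda>L. - ((- Mn T L) / real L)) \<longlonglongrightarrow> - l" by (intro tendsto_minus)
  then show ?thesis by (auto simp: convergent_def)
qed

lemma lim_diff_bounded:
  fixes X Y :: "nat \<Rightarrow> real"
  assumes "convergent (\<lambda>L. X L / real L)" "convergent (\<lambda>L. Y L / real L)"
    and "\<And>L. \<bar>X L - c * Y L\<bar> \<le> E"
  shows "lim (\<lambda>L. X L / real L) = c * lim (\<lambda>L. Y L / real L)"
proof -
  have tX: "(\<lambda>L. X L / real L) \<longlonglongrightarrow> lim (\<lambda>L. X L / real L)" using assms(1) by (simp add: convergent_LIMSEQ_iff)
  have tY: "(\<lambda>L. Y L / real L) \<longlonglongrightarrow> lim (\<lambda>L. Y L / real L)" using assms(2) by (simp add: convergent_LIMSEQ_iff)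
  have d: "(\<lambda>L. (X L - c * Y L) / real L) \<longlonglongrightarrow> 0"
  proof (rule tendsto_sandwich[of "\<lambda>L. - E / real L" _ sequentially "\<lambda>L. E / real L"])
    show "\<forall>\<^sub>F L in sequentially. - E / real L \<le> (X L - c * Y L) / real L"
      using assms(3) by (intro always_eventually allI divide_right_mono) (auto simp: abs_le_iff, smt (verit) assms(3))
    show "\<forall>\<^sub>F L in sequentially. (X L - c * Y L) / real L \<le> E / real L"
      using assms(3) by (intro always_eventually allI divide_right_mono) (auto simp: abs_le_iff)
    show "(\<lambda>L. - E / real L) \<longlonglongrightarrow> 0" by (rule lim_const_over_n)
    show "(\<lambda>L. E / real L) \<longlonglongrightarrow> 0" by (rule lim_const_over_n)
  qed
  have "(\<lambda>L. X L / real L - c * (Y L / real L)) \<longlonglongrightarrow> lim (\<lambda>L. X L / real L) - c * lim (\<lambda>L. Y L / real L)"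
    by (intro tendsto_intros tX tY)
  moreover have "(\<lambda>L. X L / real L - c * (Y L / real L)) = (\<lambda>L. (X L - c * Y L) / real L)"
    by (auto simp: diff_divide_distrib)
  ultimately have "lim (\<lambda>L. X L / real L) - c * lim (\<lambda>L. Y L / real L) = 0"
    using d LIMSEQ_unique by metis
  then show ?thesis by simp
qed

lemma transfer:
  assumes g: "good T K" and g': "good T' K'" and c: "c > 0"
    and rel: "\<And>a L. \<bar>T' a L - c * T a L\<bar> \<le> E"
  shows "lim (\<lambda>L. Mx T' L / real L) = c * lim (\<lambda>L. Mx T L / real L)"
    and "lim (\<lambda>L. Mn T' L / real L) = c * lim (\<lambda>L. Mn T L / real L)"
proof -
  have "\<bar>Mx T' L - c * Mx T L\<bar> \<le> E" for L
  proof -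
    have "Mx T' L \<le> c * Mx T L + E"
    proof (rule Mx_least)
      fix a
      have "T' a L \<le> c * T a L + E" using rel[of a L] by (simp add: abs_le_iff)
      also have "\<dots> \<le> c * Mx T L + E" using Mx_upper[OF g] c by simp
      finally show "T' a L \<le> c * Mx T L + E" .
    qed
    moreover have "Mx T L \<le> (Mx T' L + E) / c"
    proof (rule Mx_least)
      fix a
      have "c * T a L \<le> T' a L + E" using rel[of a L] by (simp add: abs_le_iff)
      also have "\<dots> \<le> Mx T' L + E" using Mx_upper[OF g'] by simp
      finally show "T a L \<le> (Mx T' L + E) / c" using c by (simp add: field_simps)
    qed
    then have "c * Mx T L \<le> Mx T' L + E" using c by (simp add: field_simps)
    ultimately show ?thesis by (simp add: abs_le_iff)
  qed
  then show "lim (\<lambda>L. Mx T' L / real L) = c * lim (\<lambda>L. Mx T L / real L)"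
    by (intro lim_diff_bounded Mx_conv[OF g] Mx_conv[OF g'])
  have "\<bar>Mn T' L - c * Mn T L\<bar> \<le> E" for L
  proof -
    have "c * Mn T L - E \<le> Mn T' L"
    proof (rule Mn_greatest)
      fix a
      have "c * Mn T L - E \<le> c * T a L - E" using Mn_lower[OF g] c by simp
      also have "\<dots> \<le> T' a L" using rel[of a L] by (simp add: abs_le_iff)
      finally show "c * Mn T L - E \<le> T' a L" .
    qed
    moreover have "(Mn T' L - E) / c \<le> Mn T L"
    proof (rule Mn_greatest)
      fix a
      have "Mn T' L - E \<le> T' a L - E" using Mn_lower[OF g'] by simp
      also have "\<dots> \<le> c * T a L" using rel[of a L] by (simp add: abs_le_iff)
      finally show "(Mn T' L - E) / c \<le> T a L" using c by (simp add: field_simps)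
    qed
    then have "Mn T' L - E \<le> c * Mn T L" using c by (simp add: field_simps)
    ultimately show ?thesis by (simp add: abs_le_iff)
  qed
  then show "lim (\<lambda>L. Mn T' L / real L) = c * lim (\<lambda>L. Mn T L / real L)"
    by (intro lim_diff_bounded Mn_conv[OF g] Mn_conv[OF g'])
qed

lemma bounds:
  assumes g: "good T K" and lh: "\<And>a L. lo * real L \<le> T a L \<and> T a L \<le> hi * real L"
  shows "lo \<le> lim (\<lambda>L. Mn T L / real L)" "lim (\<lambda>L. Mn T L / real L) \<le> lim (\<lambda>L. Mx T L / real L)"
    "lim (\<lambda>L. Mx T L / real L) \<le> hi"
proof -
  have tX: "(\<lambda>L. Mx T L / real L) \<longlonglongrightarrow> lim (\<lambda>L. Mx T L / real L)" using Mx_conv[OF g] by (simp add: convergent_LIMSEQ_iff)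
  have tY: "(\<lambda>L. Mn T L / real L) \<longlonglongrightarrow> lim (\<lambda>L. Mn T L / real L)" using Mn_conv[OF g] by (simp add: convergent_LIMSEQ_iff)
  have "lo * real L \<le> Mn T L" for L using lh by (intro Mn_greatest) auto
  then have "\<forall>L\<ge>1. lo \<le> Mn T L / real L" by (auto simp: field_simps)
  then show "lo \<le> lim (\<lambda>L. Mn T L / real L)" by (intro LIMSEQ_le_const[OF tY]) blast
  have "Mx T L \<le> hi * real L" for L using lh by (intro Mx_least) auto
  then have "\<forall>L\<ge>1. Mx T L / real L \<le> hi" by (auto simp: field_simps)
  then show "lim (\<lambda>L. Mx T L / real L) \<le> hi" by (intro LIMSEQ_le_const2[OF tX]) blast
  have "Mn T L \<le> Mx T L" for L using Mn_lower[OF g, of L 0] Mx_upper[OF g, of 0 L] by simp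
  then have "\<forall>L. Mn T L / real L \<le> Mx T L / real L" by (simp add: divide_right_mono)
  then show "lim (\<lambda>L. Mn T L / real L) \<le> lim (\<lambda>L. Mx T L / real L)" by (intro LIMSEQ_le[OF tY tX]) blast
qed

lemma conclude:
  assumes g: "good T K" and eq: "lim (\<lambda>L. Mx T L / real L) = x" "lim (\<lambda>L. Mn T L / real L) = x"
  shows "\<forall>e>0. \<exists>N. \<forall>a L. N \<le> L \<longrightarrow> \<bar>T a L / real L - x\<bar> < e"
proof (intro allI impI)
  fix e :: real assume e: "e > 0"
  have tX: "(\<lambda>L. Mx T L / real L) \<longlonglongrightarrow> x" using Mx_conv[OF g] eq by (simp add: convergent_LIMSEQ_iff)
  have tY: "(\<lambda>L. Mn T L / real L) \<longlonglongrightarrow> x" using Mn_conv[OF g] eq by (simp add: convergent_LIMSEQ_iff)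
  obtain N1 where N1: "\<forall>L\<ge>N1. \<bar>Mx T L / real L - x\<bar> < e" using LIMSEQ_D[OF tX e] by auto
  obtain N2 where N2: "\<forall>L\<ge>N2. \<bar>Mn T L / real L - x\<bar> < e" using LIMSEQ_D[OF tY e] by auto
  show "\<exists>N. \<forall>a L. N \<le> L \<longrightarrow> \<bar>T a L / real L - x\<bar> < e"
  proof (intro exI allI impI)
    fix a L assume L: "max N1 N2 \<le> L"
    have "Mn T L / real L \<le> T a L / real L" using Mn_lower[OF g] by (simp add: divide_right_mono)
    moreover have "T a L / real L \<le> Mx T L / real L" using Mx_upper[OF g] by (simp add: divide_right_mono)
    ultimately show "\<bar>T a L / real L - x\<bar> < e" using N1 N2 L by (force simp: abs_less_iff)
  qed
qed



lemma D_core: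
  fixes t :: "nat \<Rightarrow> real" and \<theta> lm :: real
  assumes irr: "\<theta> \<notin> \<rat>" and th1: "1/4 < \<theta>" and th2: "\<theta> < 1/2" and lam: "lm > 0"
    and stp: "\<And>n. t (Suc n) - t n - \<theta> \<in> \<int>"
    and rng: "\<And>n. \<theta> - 1 \<le> t n \<and> t n < \<theta>"
    and bad: "\<And>n. \<not> (-lm < t n \<and> t n < 0)"
  shows False
proof -
  have Z: "t n - t 0 - real n * \<theta> \<in> \<int>" for n
  proof (induction n)
    case 0 then show ?case by simp
  next
    case (Suc n)
    have "t (Suc n) - t 0 - real (Suc n) * \<theta> = (t (Suc n) - t n - \<theta>) + (t n - t 0 - real n * \<theta>)"
      by (simp add: algebra_simps)
    then show ?case using Suc stp[of n] by (metis Ints_add)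
  qed
  define l where "l = min lm (1/2)"
  have l: "0 < l" "l \<le> lm" "l \<le> 1/2" using lam unfolding l_def by auto
  define \<tau> where "\<tau> = - l / 2"
  define \<alpha> where "\<alpha> = frac (\<tau> - t 0)"
  have a01: "0 \<le> \<alpha>" "\<alpha> \<le> 1" unfolding \<alpha>_def using frac_ge_0 frac_lt_1 less_imp_le by auto
  have e: "l/2 > 0" using l by simp
  obtain k where k: "k > 0" "\<bar>frac (real k * \<theta>) - \<alpha>\<bar> < l/2"
    using Kronecker_approx_1_explicit[OF irr a01 e] by blast
  define \<delta> where "\<delta> = frac (real k * \<theta>) - \<alpha>"
  have "t k - \<tau> - \<delta> = (t k - t 0 - real k * \<theta>) + of_int \<lfloor>real k * \<theta>\<rfloor> - of_int \<lfloor>\<tau> - t 0\<rfloor>"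
    unfolding \<delta>_def \<alpha>_def frac_def by (simp add: algebra_simps)
  also have "\<dots> \<in> \<int>" using Z[of k] by (intro Ints_add[OF Z[of k]] Ints_diff Ints_of_int Ints_add)
  finally obtain m :: int where m: "t k - \<tau> - \<delta> = of_int m" by (auto elim: Ints_cases)
  have dl: "\<bar>\<delta>\<bar> < l/2" using k \<delta>_def by simp
  have tk: "t k = \<tau> + of_int m + \<delta>" using m by simp
  show False
  proof (cases "m \<ge> 1")
    case True
    then have "real_of_int m \<ge> 1" by simp
    then show False using tk dl rng[of k] th2 l unfolding \<tau>_def by (simp add: abs_less_iff)
  next
    case False
    show False
    proof (cases "m \<le> -1")
      case True
      then have "real_of_int m \<le> -1" by simp
      then show False using tk dl rng[of k] th1 l unfolding \<tau>_def by (simp add: abs_less_iff)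
    next
      case False
      with \<open>\<not> m \<ge> 1\<close> have "m = 0" by simp
      then show False using tk dl bad[of k] l unfolding \<tau>_def by (auto simp: abs_less_iff)
    qed
  qed
qed


lemma theta_irr: "ln 2 / ln 6 \<notin> (\<rat> :: real set)"
proof
  assume "ln 2 / ln 6 \<in> (\<rat> :: real set)"
  then obtain a b :: int where ab0: "b > 0" "ln (2::real) / ln 6 = of_int a / of_int b"
    by (metis Rats_cases')
  define bn where "bn = nat b"
  have ab: "bn > 0" "ln (2::real) / ln 6 = of_int a / of_nat bn" using ab0 unfolding bn_def by auto
  have l6: "ln (6::real) > 0" by simp
  have l2: "ln (2::real) > 0" by simp
  have "real bn * ln 2 = of_int a * ln 6" using ab l6 by (simp add: field_simps)
  moreover have "a > 0"
  proof -
    have "of_int a / real bn > 0" using ab l2 l6 by (metis divide_pos_pos)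
    then show ?thesis using ab(1) by (simp add: zero_less_divide_iff)
  qed
  ultimately have "ln ((2::real) ^ bn) = ln ((6::real) ^ nat a)" by (simp add: ln_realpow)
  then have "(2::real) ^ bn = 6 ^ nat a" by simp
  then have eq: "(2::nat) ^ bn = 6 ^ nat a" by (metis of_nat_eq_iff of_nat_numeral of_nat_power)
  have "(6::nat) dvd 6 ^ nat a" using \<open>a > 0\<close> by (intro dvd_power) auto
  then have "3 dvd (6::nat) ^ nat a" by (rule dvd_trans[rotated]) simp
  then have "3 dvd (2::nat) ^ bn" using eq by simp
  moreover have "coprime (3::nat) (2 ^ bn)" by simp
  ultimately show False by (metis coprime_iff_gcd_eq_1 gcd_nat.absorb1 numeral_eq_one_iff semiring_norm(86))
qed

lemma theta_bnds: "1/4 < ln 2 / ln (6::real)" "ln 2 / ln (6::real) < 1/2"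
proof -
  have l6: "ln (6::real) > 0" by simp
  have h1: "ln ((2::real)^4) = 4 * ln 2" using ln_realpow[of 2 4] by simp
  have h2: "ln (6::real) < ln ((2::real)^4)" by (rule iffD2[OF ln_less_cancel_iff]) auto
  have "ln (6::real) < 4 * ln 2" using h1 h2 by linarith
  then show "1/4 < ln 2 / ln (6::real)" using l6 by (simp add: field_simps)
  have h3: "ln ((2::real)^2) = 2 * ln 2" using ln_realpow[of 2 2] by simp
  have h4: "ln ((2::real)^2) < ln (6::real)" by (rule iffD2[OF ln_less_cancel_iff]) auto
  have "2 * ln 2 < ln (6::real)" using h3 h4 by linarith
  then show "ln 2 / ln (6::real) < 1/2" using l6 by (simp add: field_simps)
qed



lemma dyn:
  fixes x y :: "nat \<Rightarrow> real"
  assumes x0: "0 \<le> x 0" and xy0: "x 0 < y 0"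
    and step: "\<And>n. (y n \<le> 1 \<and> x (Suc n) = 2 * x n \<and> y (Suc n) = 2 * y n) \<or>
                    (1 \<le> x n \<and> y n \<le> 2 \<and> x (Suc n) = x n / 3 \<and> y (Suc n) = y n / 3)"
  shows False
proof -
  have stS: "y n \<le> 1 \<and> x (Suc n) = 2 * x n \<and> y (Suc n) = 2 * y n" if "x n < 1" for n
    using step[of n] that by linarith
  have stR: "1 \<le> x n \<and> y n \<le> 2 \<and> x (Suc n) = x n / 3 \<and> y (Suc n) = y n / 3" if "\<not> (y n \<le> 1)" for n
    using step[of n] that by linarith
  show False
proof (cases "x 0 = 0")
  case True
  have "x n = 0 \<and> y n = 2^n * y 0" for n
  proof (induction n)
    case 0 then show ?case using True by simp
  next
    case (Suc n) then show ?case using stS[of n] by simp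
  qed
  then have yle: "2^n * y 0 \<le> 1" for n
  proof -
    have h: "x n = 0" "y n = 2^n * y 0" using \<open>\<And>n. x n = 0 \<and> y n = 2^n * y 0\<close>[of n] by auto
    then show ?thesis using stS[of n] by simp
  qed
  obtain n where "1 / y 0 < 2^n" using real_arch_pow[of 2 "1 / y 0"] by auto
  then have "1 < 2^n * y 0" using xy0 True by (simp add: field_simps)
  then show False using yle[of n] by simp
next
  case False
  then have xp0: "x 0 > 0" using x0 by simp
  define r where "r = y 0 / x 0"
  have r1: "r > 1" unfolding r_def using xp0 xy0 by simp
  have inv: "x n > 0 \<and> y n = r * x n" for n
  proof (induction n)
    case 0 then show ?case using xp0 unfolding r_def by simp
  next
    case (Suc n)
    show ?case
      using step[of n] Suc by (elim disjE conjE) (simp, metis times_divide_eq_right divide_pos_pos zero_less_numeral)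
  qed
  have xlt2: "x n < 2" for n
  proof -
    have "x n < y n" using inv[of n] r1 by (simp add: mult_less_cancel_right1)
    then show ?thesis using step[of n] by linarith
  qed
  have nobad: "\<not> (1 / r < x n \<and> x n < 1)" for n
  proof
    assume b: "1 / r < x n \<and> x n < 1"
    then have "1 < r * x n" using r1 by (simp add: field_simps)
    then show False using stS[of n] b inv[of n] by simp
  qed
  obtain n0 where n0: "x n0 \<ge> 1/3"
  proof (rule ccontr)
    assume "\<not> thesis"
    then have sm: "x n < 1/3" for n using that by (meson not_le)
    have xe: "x n = 2^n * x 0" for n
    proof (induction n)
      case 0 then show ?case by simp
    next
      case (Suc n) then show ?case using stS[of n] sm[of n] by simp
    qed
    obtain n where "1 / x 0 < 2^n" using real_arch_pow[of 2 "1 / x 0"] by auto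
    then have "1 < 2^n * x 0" using xp0 by (simp add: field_simps)
    then show False using sm[of n] xe[of n] by simp
  qed
  have big: "x (n0 + n) \<ge> 1/3" for n
  proof (induction n)
    case 0 then show ?case using n0 by simp
  next
    case (Suc n)
    show ?case
      using step[of "n0+n"] Suc by (elim disjE) simp_all
  qed
  define \<theta> :: real where "\<theta> = ln 2 / ln 6"
  define t where "t n = ln (x (n0+n)) / ln 6" for n
  have l6: "ln (6::real) > 0" by simp
  have l6s: "ln (6::real) = ln 2 + ln 3" using ln_mult[of 2 3] by simp
  show False
  proof (rule D_core[of \<theta> "ln r / ln 6" t])
    show "\<theta> \<notin> \<rat>" unfolding \<theta>_def by (rule theta_irr)
    show "1/4 < \<theta>" "\<theta> < 1/2" unfolding \<theta>_def using theta_bnds by auto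
    show "0 < ln r / ln 6" using r1 l6 by simp
  next
    fix n
    have xp: "x (n0+n) > 0" using inv by blast
    have tt: "t (Suc n) - t n - \<theta> = (ln (x (Suc (n0+n))) - ln (x (n0+n)) - ln 2) / ln 6"
      unfolding t_def \<theta>_def by (simp add: diff_divide_distrib)
    show "t (Suc n) - t n - \<theta> \<in> \<int>"
    proof (cases "x (Suc (n0+n)) = 2 * x (n0+n)")
      case True
      then have "ln (x (Suc (n0+n))) = ln 2 + ln (x (n0+n))" using xp ln_mult[of 2 "x (n0+n)"] by simp
      then have "t (Suc n) - t n - \<theta> = 0" using tt by simp
      then show ?thesis by simp
    next
      case False
      then have "x (Suc (n0+n)) = x (n0+n) / 3" using step[of "n0+n"] by linarith
      then have "ln (x (Suc (n0+n))) = ln (x (n0+n)) - ln 3" using xp ln_div[of "x (n0+n)" 3] by (simp only:) simp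
      then have "t (Suc n) - t n - \<theta> = (- ln 6) / ln 6" using tt l6s by simp
      then have "t (Suc n) - t n - \<theta> = -1" using l6 by simp
      then show ?thesis by simp
    qed
  next
    fix n
    have xp: "x (n0+n) > 0" using inv by blast
    have "ln (x (n0+n)) < ln 2" using xp xlt2[of "n0+n"] by simp
    then have A: "t n < \<theta>" unfolding t_def \<theta>_def using l6 by (intro divide_strict_right_mono)
    have "ln (1/3) \<le> ln (x (n0+n))" using xp big[of n] by (subst ln_le_cancel_iff) auto
    then have "- ln 3 \<le> ln (x (n0+n))" by (simp add: ln_div)
    then have B: "- ln 3 / ln 6 \<le> t n" unfolding t_def using l6 by (intro divide_right_mono) auto
    have "\<theta> - 1 = (ln 2 - ln 6) / ln 6" unfolding \<theta>_def using l6 by (simp add: diff_divide_distrib)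
    also have "\<dots> = - ln 3 / ln 6" using l6s by simp
    finally show "\<theta> - 1 \<le> t n \<and> t n < \<theta>" using A B by simp
  next
    fix n
    have xp: "x (n0+n) > 0" using inv by blast
    show "\<not> (- (ln r / ln 6) < t n \<and> t n < 0)"
    proof
      assume a: "- (ln r / ln 6) < t n \<and> t n < 0"
      then have "- ln r < ln (x (n0+n))" "ln (x (n0+n)) < 0"
        unfolding t_def using l6 by (simp_all add: field_simps)
      then have "ln (1/r) < ln (x (n0+n))" "x (n0+n) < 1" using r1 xp by (simp_all add: ln_div)
      then have "1/r < x (n0+n)" "x (n0+n) < 1" using r1 xp ln_less_cancel_iff[of "1/r" "x (n0+n)"] by auto
      then show False using nobad by blast
    qed
  qed
qed
qed



lemma T_add: "TT \<tau> i a (L1+L2) = TT \<tau> i a L1 + TT \<tau> i (a + int L1) L2"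
proof (induction L2)
  case 0 then show ?case by (simp add: TT_def)
next
  case (Suc L2) then show ?case by (simp add: TT_def algebra_simps)
qed

lemma u_bnd: assumes "is_tiling KC_tiles \<tau>" shows "\<bar>uu \<tau> i k\<bar> \<le> 2"
proof -
  have "i + 1 = (i+1)" by simp
  from row_type[OF assms, of "i+1"] show ?thesis
  proof
    assume "\<forall>k. \<tau> (k, i + 1) \<in> sT" then show ?thesis using srow_rel(2)[OF assms, of i k] by auto
  next
    assume "\<forall>k. \<tau> (k, i + 1) \<in> rT" then show ?thesis using rrow_rel(2)[OF assms, of i k] by auto
  qed
qed

lemma T_good: assumes "is_tiling KC_tiles \<tau>" shows "good (TT \<tau> i) 2"
  unfolding good_def
proof (intro conjI allI)
  fix a L1 L2 show "TT \<tau> i a (L1 + L2) = TT \<tau> i a L1 + TT \<tau> i (a + int L1) L2" by (rule T_add)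
next
  fix a L
  have "\<bar>TT \<tau> i a L\<bar> \<le> (\<Sum>k<L. \<bar>uu \<tau> i (a + int k)\<bar>)" unfolding TT_def by (rule sum_abs)
  also have "\<dots> \<le> (\<Sum>k<L. 2)" using u_bnd[OF assms] by (intro sum_mono) auto
  finally show "\<bar>TT \<tau> i a L\<bar> \<le> 2 * real L" by simp
qed

lemma T_range: assumes "\<And>k. lo \<le> uu \<tau> i k \<and> uu \<tau> i k \<le> hi"
  shows "lo * real L \<le> TT \<tau> i a L \<and> TT \<tau> i a L \<le> hi * real L"
proof -
  have "(\<Sum>k<L. lo) \<le> TT \<tau> i a L" unfolding TT_def using assms by (intro sum_mono) auto
  moreover have "TT \<tau> i a L \<le> (\<Sum>k<L. hi)" unfolding TT_def using assms by (intro sum_mono) auto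
  ultimately show ?thesis by (simp add: mult.commute)
qed

definition al where "al \<tau> i = lim (\<lambda>L. Mx (TT \<tau> i) L / real L)"
definition be where "be \<tau> i = lim (\<lambda>L. Mn (TT \<tau> i) L / real L)"

lemma row_step:
  assumes til: "is_tiling KC_tiles \<tau>"
  shows "(al \<tau> i \<le> 1 \<and> be \<tau> (i+1) = 2 * be \<tau> i \<and> al \<tau> (i+1) = 2 * al \<tau> i) \<or>
         (1 \<le> be \<tau> i \<and> al \<tau> i \<le> 2 \<and> be \<tau> (i+1) = be \<tau> i / 3 \<and> al \<tau> (i+1) = al \<tau> i / 3)"
    and "0 \<le> be \<tau> i" "be \<tau> i \<le> al \<tau> i"
proof -
  have g: "good (TT \<tau> i) 2" "good (TT \<tau> (i+1)) 2" using T_good[OF til] by auto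
  have "((al \<tau> i \<le> 1 \<and> be \<tau> (i+1) = 2 * be \<tau> i \<and> al \<tau> (i+1) = 2 * al \<tau> i) \<or>
         (1 \<le> be \<tau> i \<and> al \<tau> i \<le> 2 \<and> be \<tau> (i+1) = be \<tau> i / 3 \<and> al \<tau> (i+1) = al \<tau> i / 3))
        \<and> 0 \<le> be \<tau> i \<and> be \<tau> i \<le> al \<tau> i"
  using row_type[OF til, of "i+1"]
  proof
    assume s: "\<forall>k. \<tau> (k, i + 1) \<in> sT"
    have rng: "0 * real L \<le> TT \<tau> i a L \<and> TT \<tau> i a L \<le> 1 * real L" for a L
    proof (intro T_range)
      fix k show "0 \<le> uu \<tau> i k \<and> uu \<tau> i k \<le> 1" using srow_rel(2)[OF til s, of k] by auto
    qed
    have rel: "\<bar>TT \<tau> (i+1) a L - 2 * TT \<tau> i a L\<bar> \<le> 1" for a L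
      using srow_rel(1)[OF til s, of a L] cv_bnd[of "left_col (\<tau> (a, i + 1))"] cv_bnd[of "left_col (\<tau> (a + int L, i + 1))"]
      by (simp add: abs_le_iff)
    have tr: "al \<tau> (i+1) = 2 * al \<tau> i" "be \<tau> (i+1) = 2 * be \<tau> i"
      unfolding al_def be_def using transfer[OF g(1) g(2) _ rel] by auto
    show ?thesis using bounds[OF g(1) rng] tr unfolding al_def be_def by auto
  next
    assume s: "\<forall>k. \<tau> (k, i + 1) \<in> rT"
    have rng: "1 * real L \<le> TT \<tau> i a L \<and> TT \<tau> i a L \<le> 2 * real L" for a L
    proof (intro T_range)
      fix k show "1 \<le> uu \<tau> i k \<and> uu \<tau> i k \<le> 2" using rrow_rel(2)[OF til s, of k] by auto
    qed
    have rel: "\<bar>TT \<tau> (i+1) a L - (1/3) * TT \<tau> i a L\<bar> \<le> 1" for a L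
      using rrow_rel(1)[OF til s, of a L] cv_bnd[of "left_col (\<tau> (a, i + 1))"] cv_bnd[of "left_col (\<tau> (a + int L, i + 1))"]
      by (simp add: abs_le_iff)
    have tr: "al \<tau> (i+1) = (1/3) * al \<tau> i" "be \<tau> (i+1) = (1/3) * be \<tau> i"
      unfolding al_def be_def using transfer[OF g(1) g(2) _ rel] by auto
    show ?thesis using bounds[OF g(1) rng] tr unfolding al_def be_def by auto
  qed
  then show "(al \<tau> i \<le> 1 \<and> be \<tau> (i+1) = 2 * be \<tau> i \<and> al \<tau> (i+1) = 2 * al \<tau> i) \<or>
         (1 \<le> be \<tau> i \<and> al \<tau> i \<le> 2 \<and> be \<tau> (i+1) = be \<tau> i / 3 \<and> al \<tau> (i+1) = al \<tau> i / 3)"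
    and "0 \<le> be \<tau> i" "be \<tau> i \<le> al \<tau> i" by auto
qed

lemma al_eq_be: assumes til: "is_tiling KC_tiles \<tau>" shows "be \<tau> j = al \<tau> j"
proof (rule ccontr)
  assume ne: "be \<tau> j \<noteq> al \<tau> j"
  define x where "x n = be \<tau> (j + int n)" for n
  define y where "y n = al \<tau> (j + int n)" for n
  show False
  proof (rule dyn[of x y])
    show "0 \<le> x 0" unfolding x_def using row_step(2)[OF til] by simp
    show "x 0 < y 0" unfolding x_def y_def using row_step(3)[OF til, of j] ne by simp
    fix n
    have e: "j + int (Suc n) = (j + int n) + 1" by simp
    show "(y n \<le> 1 \<and> x (Suc n) = 2 * x n \<and> y (Suc n) = 2 * y n) \<or>
          (1 \<le> x n \<and> y n \<le> 2 \<and> x (Suc n) = x n / 3 \<and> y (Suc n) = y n / 3)"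
      unfolding x_def y_def e by (rule row_step(1)[OF til])
  qed
qed

lemma sum_shift: "(\<Sum>k\<in>{a..<a + int L}. f k) = (\<Sum>k<L. f (a + int k))"
proof -
  have "{a..<a + int L} = (\<lambda>k. a + int k) ` {..<L}"
  proof
    show "{a..<a + int L} \<subseteq> (\<lambda>k. a + int k) ` {..<L}"
    proof
      fix x assume "x \<in> {a..<a + int L}"
      then have "x = a + int (nat (x - a))" "nat (x - a) < L" by auto
      then show "x \<in> (\<lambda>k. a + int k) ` {..<L}" by blast
    qed
  qed auto
  moreover have "inj_on (\<lambda>k. a + int k) {..<L}" by (auto simp: inj_on_def)
  ultimately show ?thesis by (simp add: sum.reindex)
qed

theorem mainTheorem4:
  fixes \<tau> :: "int \<times> int \<Rightarrow> tile" and j :: int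
  assumes "is_tiling KC_tiles \<tau>"
  defines "u \<equiv> (\<lambda>k::int. hval (top_col (\<tau> (k, j))))"
  shows "\<exists>x::real. \<forall>\<epsilon>>0. \<exists>N::int. N > 0 \<and> (\<forall>a b::int. N \<le> b - a \<longrightarrow>
            \<bar>(\<Sum>k\<in>{a..<b}. u k) / real_of_int (b - a) - x\<bar> < \<epsilon>)"
proof (rule exI[where x="al \<tau> j"], intro allI impI)
  fix \<epsilon> :: real assume e: "\<epsilon> > 0"
  have c: "\<forall>e>0. \<exists>N. \<forall>a L. N \<le> L \<longrightarrow> \<bar>TT \<tau> j a L / real L - al \<tau> j\<bar> < e"
    by (rule conclude[OF T_good[OF assms(1)]]) (use al_eq_be[OF assms(1)] in \<open>auto simp: al_def be_def\<close>)
  then obtain N where N: "\<And>a L. N \<le> L \<Longrightarrow> \<bar>TT \<tau> j a L / real L - al \<tau> j\<bar> < \<epsilon>" using e by blast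
  show "\<exists>N::int. N > 0 \<and> (\<forall>a b::int. N \<le> b - a \<longrightarrow>
            \<bar>(\<Sum>k\<in>{a..<b}. u k) / real_of_int (b - a) - al \<tau> j\<bar> < \<epsilon>)"
  proof (intro exI conjI allI impI)
    show "int N + 1 > 0" by simp
    fix a b :: int assume ab: "int N + 1 \<le> b - a"
    define L where "L = nat (b - a)"
    have bL: "b = a + int L" "real_of_int (b - a) = real L" "N \<le> L" using ab unfolding L_def by auto
    have "(\<Sum>k\<in>{a..<b}. u k) = TT \<tau> j a L"
      unfolding bL(1) sum_shift TT_def uu_def u_def by simp
    then show "\<bar>(\<Sum>k\<in>{a..<b}. u k) / real_of_int (b - a) - al \<tau> j\<bar> < \<epsilon>"
      using N[OF bL(3), of a] bL(2) by simp
  qed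
qed

end
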